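(* Let $m\ge1$ be an integer and $\varepsilon\ge0$. If $\max_{\ell}|\hat\beta_\ell-\beta_\ell|\le\varepsilon$, then $$\hat{\mathcal R}(m)\le\mathcal R^*(m)+\varepsilon,\qquad \max_{\bar\beta\in\mathcal B^*}|(I-\widehat\Pi_m)^{1/2}\bar\beta|\le\mathcal R^*(m)+2\varepsilon.$$ Moreover, when $m<m^*$, also $\hat{\mathcal R}(m)\ge(\mathcal R^*(m)-\varepsilon)_+$.
   Context: Let $\beta_1,\dots,\beta_L\in\mathbb R^d$ be vectors lying in an $m^*$-dimensional linear subspace of $\mathbb R^d$, and let $\hat\beta_1,\dots,\hat\beta_L\in\mathbb R^d$ be arbitrary vectors. $|\cdot|$ is the Euclidean norm, $I$ the $d\times d$ identity, $A\preceq B$ means $B-A$ is positive semidefinite, $x_+=\max(x,0)$. Let $\mathcal A_m=\{\Pi\in\mathbb R^{d\times d}:\Pi=\Pi^\top,\ 0\preceq\Pi\preceq I,\ \operatorname{tr}\Pi\le m\}$ and let $\widehat\Pi_m$ be a minimizer over $\Pi\in\mathcal A_m$ of $R(\Pi)=\max_\ell\hat\beta_\ell^\top(I-\Pi)\hat\beta_\ell$. Set $\hat{\mathcal R}(m)=\sqrt{R(\widehat\Pi_m)}=\min_{\Pi\in\mathcal A_m}\sqrt{R(\Pi)}$, $\mathcal R^*(m)=\min_{\Pi\in\mathcal A_m}\max_\ell|(I-\Pi)^{1/2}\beta_\ell|$, and $\mathcal B^*=\{\sum_{\ell=1}^Lc_\ell\beta_\ell:\sum_\ell|c_\ell|\le1\}$.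 *)

theory Defs
  imports "HOL-Analysis.Analysis"
begin

type_synonym 'n sqmat = "real^'n^'n"

definition psd :: "'n::finite sqmat \<Rightarrow> bool" where
  "psd A \<longleftrightarrow> transpose A = A \<and> (\<forall>x. 0 \<le> x \<bullet> (A *v x))"

definition loewner_le :: "'n::finite sqmat \<Rightarrow> 'n sqmat \<Rightarrow> bool" where
  "loewner_le A B \<longleftrightarrow> psd (B - A)"

definition psd_sqrt :: "'n::finite sqmat \<Rightarrow> 'n sqmat" where
  "psd_sqrt A = (THE S. psd S \<and> S ** S = A)"

definition Aset :: "nat \<Rightarrow> 'n::finite sqmat set" where
  "Aset m = {P. transpose P = P \<and> loewner_le 0 P \<and> loewner_le P (mat 1) \<and> trace P \<le> real m}"

definition Rfun :: "nat \<Rightarrow> (nat \<Rightarrow> real^'n::finite) \<Rightarrow> 'n sqmat \<Rightarrow> real" where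
  "Rfun L bh P = Max ((\<lambda>l. bh l \<bullet> ((mat 1 - P) *v bh l)) ` {1..L})"

definition Rstar :: "nat \<Rightarrow> (nat \<Rightarrow> real^'n::finite) \<Rightarrow> nat \<Rightarrow> real" where
  "Rstar L b m = Inf ((\<lambda>P. Max ((\<lambda>l. norm (psd_sqrt (mat 1 - P) *v b l)) ` {1..L})) ` Aset m)"

definition Bstar :: "nat \<Rightarrow> (nat \<Rightarrow> real^'n::finite) \<Rightarrow> (real^'n) set" where
  "Bstar L b = {(\<Sum>l\<in>{1..L}. c l *\<^sub>R b l) | c. (\<Sum>l\<in>{1..L}. \<bar>c l\<bar>) \<le> 1}"

end

theory Submission imports Defs begin

lemma sym_inner:
  fixes M :: "real^'n::finite^'n"
  assumes "transpose M = M"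
  shows "x \<bullet> (M *v y) = (M *v x) \<bullet> y"
proof -
  have "x \<bullet> (M *v y) = (x v* M) \<bullet> y" by (simp add: dot_lmul_matrix)
  also have "x v* M = transpose M *v x" by simp
  finally show ?thesis using assms by simp
qed

lemma inner_eq_imp_eq:
  fixes a b :: "real^'n::finite"
  assumes "\<And>x. x \<bullet> a = x \<bullet> b"
  shows "a = b"
proof -
  have "(a - b) \<bullet> (a - b) = 0" using assms[of "a-b"] by (simp add: inner_diff_right)
  thus ?thesis by simp
qed

lemma sym_of_inner:
  fixes M :: "real^'n::finite^'n"
  assumes "\<And>x y. x \<bullet> (M *v y) = (M *v x) \<bullet> y"
  shows "transpose M = M"
proof -
  have "transpose M *v y = M *v y" for y
  proof (rule inner_eq_imp_eq)
    fix x
    have "x \<bullet> (transpose M *v y) = (y v* M) \<bullet> x" by (simp add: inner_commute)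
    also have "\<dots> = (M *v x) \<bullet> y" by (metis dot_lmul_matrix inner_commute)
    finally show "x \<bullet> (transpose M *v y) = x \<bullet> (M *v y)" using assms by simp
  qed
  thus ?thesis by (simp add: matrix_eq)
qed

lemma psd_kernel:
  fixes M :: "real^'n::finite^'n"
  assumes sym: "transpose M = M" and V: "subspace V" and v: "v \<in> V" and y: "y \<in> V"
    and nn: "\<And>x. x \<in> V \<Longrightarrow> 0 \<le> x \<bullet> (M *v x)" and z: "v \<bullet> (M *v v) = 0"
  shows "y \<bullet> (M *v v) = 0"
proof -
  define c where "c = y \<bullet> (M *v v)"
  define d where "d = y \<bullet> (M *v y)"
  have d0: "d \<ge> 0" using nn[OF y] by (simp add: d_def)
  have vy: "v \<bullet> (M *v y) = c" unfolding c_def using sym_inner[OF sym, of v y] by (simp add: inner_commute)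
  define t where "t = - c / (d + 1)"
  have "v + t *\<^sub>R y \<in> V" using V v y by (simp add: subspace_add subspace_scale)
  hence "0 \<le> (v + t *\<^sub>R y) \<bullet> (M *v (v + t *\<^sub>R y))" by (rule nn)
  also have "\<dots> = 2 * t * c + t^2 * d"
    by (simp add: matrix_vector_right_distrib matrix_vector_mult_scaleR inner_add_left inner_add_right
        z vy power2_eq_square c_def[symmetric] d_def[symmetric] algebra_simps)
  finally have h0: "0 \<le> 2 * t * c + t^2 * d" .
  have td: "t * (d + 1) = - c" unfolding t_def using d0 by simp
  have "(d+1)^2 * (2 * t * c + t^2 * d) = 2 * c * (d+1) * (t * (d+1)) + (t * (d+1))^2 * d"
    by (simp add: power2_eq_square algebra_simps)
  also have "\<dots> = - (c^2 * (d+2))" unfolding td by (simp add: power2_eq_square algebra_simps)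
  finally have "0 \<le> - (c^2 * (d+2))" using h0 by (metis zero_le_power2 mult_nonneg_nonneg)
  hence "c^2 * (d+2) \<le> 0" by simp
  hence "c^2 \<le> 0" using d0 by (simp add: mult_le_0_iff)
  thus ?thesis by (simp add: c_def)
qed

lemma transpose_minus: "transpose (A - B :: real^'n::finite^'n) = transpose A - transpose B"
  by (simp add: transpose_def vec_eq_iff)

lemma mat_mult_vec: "(mat c :: real^'n::finite^'n) *v x = c *\<^sub>R x"
proof -
  have e: "\<And>P f g (y::real). (if P then f else g) y = (if P then f y else g y)" by simp
  show ?thesis by (simp add: vec_eq_iff matrix_vector_mult_def mat_def e if_distrib sum.delta cong: if_cong)
qed

lemma eigvec_in_subspace:
  fixes A :: "real^'n::finite^'n"
  assumes sym: "transpose A = A" and V: "subspace V" and ne: "V \<noteq> {0}"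
    and inv: "\<And>x. x \<in> V \<Longrightarrow> A *v x \<in> V"
  shows "\<exists>v\<in>V. norm v = 1 \<and> A *v v = (v \<bullet> (A *v v)) *\<^sub>R v"
proof -
  let ?K = "sphere 0 1 \<inter> V"
  have K: "compact ?K" using closed_subspace[OF V] by (intro compact_Int_closed) auto
  obtain x where x: "x \<in> V" "x \<noteq> 0" using ne subspace_0[OF V] by blast
  have "x /\<^sub>R norm x \<in> ?K" using x V by (simp add: subspace_scale)
  hence Kne: "?K \<noteq> {}" by blast
  have lin: "linear (\<lambda>x. A *v x)" by simp
  have cont: "continuous_on ?K (\<lambda>x. x \<bullet> (A *v x))"
    by (intro continuous_intros linear_continuous_on linear_conv_bounded_linear[THEN iffD1] lin)
  obtain v where v: "v \<in> ?K" and vmax: "\<And>y. y \<in> ?K \<Longrightarrow> y \<bullet> (A *v y) \<le> v \<bullet> (A *v v)"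
    using continuous_attains_sup[OF K Kne cont] by blast
  define l where "l = v \<bullet> (A *v v)"
  define M where "M = mat l - A"
  have Mv: "M *v y = l *\<^sub>R y - A *v y" for y
    by (simp add: M_def matrix_vector_mult_diff_rdistrib mat_mult_vec)
  have symM: "transpose M = M" using sym by (simp add: M_def transpose_minus)
  have nn: "0 \<le> y \<bullet> (M *v y)" if y: "y \<in> V" for y
  proof (cases "y = 0")
    case True then show ?thesis by simp
  next
    case False
    have "y /\<^sub>R norm y \<in> ?K" using y False V by (simp add: subspace_scale)
    hence "(y /\<^sub>R norm y) \<bullet> (A *v (y /\<^sub>R norm y)) \<le> l" unfolding l_def by (rule vmax)
    hence "(y \<bullet> (A *v y)) / (norm y)^2 \<le> l"
      by (simp add: matrix_vector_mult_scaleR power2_eq_square divide_inverse mult_ac)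
    hence "y \<bullet> (A *v y) \<le> l * (norm y)^2" using False by (simp add: divide_le_eq)
    thus ?thesis by (simp add: Mv inner_diff_right power2_norm_eq_inner)
  qed
  have vn: "norm v = 1" "v \<in> V" using v by auto
  have z: "v \<bullet> (M *v v) = 0"
    using vn by (simp add: Mv inner_diff_right l_def power2_norm_eq_inner[symmetric])
  have MvV: "M *v v \<in> V" using vn inv V by (simp add: Mv subspace_diff subspace_scale)
  have "(M *v v) \<bullet> (M *v v) = 0" by (rule psd_kernel[OF symM V vn(2) MvV nn z])
  hence "M *v v = 0" by simp
  hence "A *v v = l *\<^sub>R v" by (simp add: Mv)
  thus ?thesis using vn l_def by blast
qed

lemma eigenbasis_sub:
  fixes A :: "real^'n::finite^'n"
  assumes sym: "transpose A = A"
  shows "subspace V \<Longrightarrow> (\<forall>x\<in>V. A *v x \<in> V) \<Longrightarrow>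
    \<exists>B. B \<subseteq> V \<and> finite B \<and> pairwise orthogonal B \<and>
        (\<forall>u\<in>B. norm u = 1 \<and> A *v u = (u \<bullet> (A *v u)) *\<^sub>R u) \<and> V \<subseteq> span B"
proof (induction "dim V" arbitrary: V rule: less_induct)
  case less
  note V = less.prems(1) and inv = less.prems(2)
  show ?case
  proof (cases "V = {0}")
    case True
    then show ?thesis by (intro exI[of _ "{}"]) (auto simp: span_empty)
  next
    case False
    obtain v where vV: "v \<in> V" and vn: "norm v = 1" and Av: "A *v v = (v \<bullet> (A *v v)) *\<^sub>R v"
      using eigvec_in_subspace[OF sym V False] inv by blast
    define W where "W = V \<inter> {x. orthogonal v x}"
    have W: "subspace W" unfolding W_def by (intro subspace_inter V subspace_orthogonal_to_vector)
    have invW: "\<forall>x\<in>W. A *v x \<in> W"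
    proof
      fix x assume x: "x \<in> W"
      have "v \<bullet> (A *v x) = (A *v v) \<bullet> x" by (rule sym_inner[OF sym])
      also have "\<dots> = 0" using x by (subst Av) (simp add: W_def orthogonal_def)
      finally show "A *v x \<in> W" using x inv by (simp add: W_def orthogonal_def)
    qed
    have "v \<notin> W" using vn by (auto simp: W_def orthogonal_def)
    hence "W \<subset> V" using vV by (auto simp: W_def)
    hence "dim W < dim V" using W V by (metis dim_psubset span_eq_iff)
    then obtain B where B: "B \<subseteq> W" "finite B" "pairwise orthogonal B"
        "\<forall>u\<in>B. norm u = 1 \<and> A *v u = (u \<bullet> (A *v u)) *\<^sub>R u" "W \<subseteq> span B"
      using less.hyps[OF _ W invW] by blast
    have vB: "v \<notin> B" using B(1) \<open>v \<notin> W\<close> by blast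
    show ?thesis
    proof (intro exI[of _ "insert v B"] conjI)
      show "insert v B \<subseteq> V" using B(1) vV by (auto simp: W_def)
      show "finite (insert v B)" using B(2) by simp
      show "pairwise orthogonal (insert v B)"
        using B(1,3) vB unfolding pairwise_insert
        by (auto simp: W_def orthogonal_def inner_commute)
      show "\<forall>u\<in>insert v B. norm u = 1 \<and> A *v u = (u \<bullet> (A *v u)) *\<^sub>R u"
        using B(4) vn Av by auto
      show "V \<subseteq> span (insert v B)"
      proof
        fix x assume x: "x \<in> V"
        have "x - (v \<bullet> x) *\<^sub>R v \<in> W"
          using x vV V vn by (simp add: W_def orthogonal_def subspace_diff subspace_scale inner_diff_right
              power2_norm_eq_inner[symmetric])
        hence "x - (v \<bullet> x) *\<^sub>R v \<in> span B" using B(5) by blast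
        thus "x \<in> span (insert v B)" by (auto simp: span_breakdown_eq)
      qed
    qed
  qed
qed

lemma eigenbasis:
  fixes A :: "real^'n::finite^'n"
  assumes sym: "transpose A = A"
  obtains B where "finite B" "pairwise orthogonal B"
    "\<And>u. u \<in> B \<Longrightarrow> norm u = 1" "\<And>u. u \<in> B \<Longrightarrow> A *v u = (u \<bullet> (A *v u)) *\<^sub>R u"
    "\<And>x. x \<in> span B"
  using eigenbasis_sub[OF sym, of UNIV] by (auto simp: subspace_UNIV)

lemma psd_sqrt_exists:
  fixes A :: "real^'n::finite^'n"
  assumes "psd A"
  shows "\<exists>S. psd S \<and> S ** S = A"
proof -
  have sym: "transpose A = A" and nn: "\<And>x. 0 \<le> x \<bullet> (A *v x)" using assms by (auto simp: psd_def)
  obtain B where B: "finite B" "pairwise orthogonal B"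
    "\<And>u. u \<in> B \<Longrightarrow> norm u = 1" "\<And>u. u \<in> B \<Longrightarrow> A *v u = (u \<bullet> (A *v u)) *\<^sub>R u"
    "\<And>x. x \<in> span B"
    using eigenbasis[OF sym] by metis
  define lam where "lam u = u \<bullet> (A *v u)" for u
  define f where "f x = (\<Sum>u\<in>B. (sqrt (lam u) * (u \<bullet> x)) *\<^sub>R u)" for x
  have lf: "linear f"
    unfolding linear_iff f_def
    by (simp add: inner_add_right distrib_left scaleR_add_left sum.distrib scaleR_sum_right mult.left_commute)
  define S where "S = matrix f"
  have Sv: "S *v x = f x" for x unfolding S_def using matrix_works[OF lf[unfolded linear_matrix_vector_mul_eq[symmetric]]] by simp
  have orth: "w \<bullet> u = (if w = u then 1 else 0)" if "w \<in> B" "u \<in> B" for w u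
    using B(2,3) that by (auto simp: pairwise_def orthogonal_def power2_norm_eq_inner[symmetric])
  have fu: "f u = sqrt (lam u) *\<^sub>R u" if u: "u \<in> B" for u
  proof -
    have "f u = (\<Sum>w\<in>B. if w = u then sqrt (lam u) *\<^sub>R u else 0)"
      unfolding f_def by (rule sum.cong) (auto simp: orth u)
    thus ?thesis using B(1) u by simp
  qed
  have lam0: "lam u \<ge> 0" for u unfolding lam_def by (rule nn)
  have lff: "linear (f \<circ> f)" using lf lf by (rule linear_compose)
  have "(f \<circ> f) x = A *v x" for x
  proof (rule linear_eq_on_span[OF lff _ _ B(5)])
    show "linear ((*v) A)" by simp
    fix u assume u: "u \<in> B"
    have "(f \<circ> f) u = sqrt (lam u) *\<^sub>R f u" using u by (simp add: fu linear_cmul[OF lf])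
    also have "\<dots> = lam u *\<^sub>R u" using u lam0[of u] by (simp add: fu)
    also have "\<dots> = A *v u" using B(4)[OF u] by (simp add: lam_def)
    finally show "(f \<circ> f) u = A *v u" .
  qed
  hence SS: "S ** S = A" by (simp add: matrix_eq Sv matrix_vector_mul_assoc[symmetric])
  have symS: "transpose S = S"
  proof (rule sym_of_inner)
    fix x y
    show "x \<bullet> (S *v y) = (S *v x) \<bullet> y"
      by (simp add: Sv f_def inner_sum_right inner_sum_left mult_ac inner_commute)
  qed
  have "0 \<le> x \<bullet> (S *v x)" for x
    by (simp add: Sv f_def inner_sum_right inner_commute lam0 sum_nonneg mult.assoc)
  hence "psd S" using symS by (simp add: psd_def)
  thus ?thesis using SS by blast
qed

lemma psd_zero_form:
  fixes S :: "real^'n::finite^'n"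
  assumes "psd S" "u \<bullet> (S *v u) = 0"
  shows "S *v u = 0"
proof -
  have "(S *v u) \<bullet> (S *v u) = 0"
  proof (rule psd_kernel[of S UNIV])
    show "transpose S = S" using assms(1) by (simp add: psd_def)
    show "subspace (UNIV :: (real^'n) set)" by (rule subspace_UNIV)
    show "\<And>x. x \<in> UNIV \<Longrightarrow> 0 \<le> x \<bullet> (S *v x)" using assms(1) by (simp add: psd_def)
    show "u \<bullet> (S *v u) = 0" by (rule assms(2))
  qed auto
  thus ?thesis by simp
qed

lemma psd_sqrt_unique:
  fixes S T :: "real^'n::finite^'n"
  assumes S: "psd S" and T: "psd T" and eq: "S ** S = T ** T"
  shows "S = T"
proof -
  define D where "D = S - T"
  have symS: "transpose S = S" and symT: "transpose T = T" using S T by (auto simp: psd_def)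
  have symD: "transpose D = D" using symS symT by (simp add: D_def transpose_minus)
  obtain B where B: "\<And>u. u \<in> B \<Longrightarrow> D *v u = (u \<bullet> (D *v u)) *\<^sub>R u" "\<And>x. x \<in> span B"
    using eigenbasis[OF symD] by metis
  have Du: "D *v u = 0" if u: "u \<in> B" for u
  proof -
    define mu where "mu = u \<bullet> (D *v u)"
    have Dmu: "D *v u = mu *\<^sub>R u" using B(1)[OF u] by (simp add: mu_def)
    have SSu: "S *v (S *v u) = T *v (T *v u)" using eq by (simp add: matrix_vector_mul_assoc)
    have "S *v (D *v u) + D *v (T *v u) = S *v (S *v u) - T *v (T *v u)"
      by (simp add: D_def matrix_vector_mult_diff_distrib matrix_vector_mult_diff_rdistrib)
    hence "S *v (D *v u) + D *v (T *v u) = 0" using SSu by simp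
    hence "u \<bullet> (S *v (D *v u) + D *v (T *v u)) = 0" by simp
    hence "u \<bullet> (S *v (D *v u)) + u \<bullet> (D *v (T *v u)) = 0" by (simp only: inner_add_right)
    moreover have "u \<bullet> (D *v (T *v u)) = (D *v u) \<bullet> (T *v u)" by (rule sym_inner[OF symD])
    ultimately have "mu * (u \<bullet> (S *v u) + u \<bullet> (T *v u)) = 0"
      by (simp add: Dmu matrix_vector_mult_scaleR distrib_left inner_commute)
    moreover have "0 \<le> u \<bullet> (S *v u)" "0 \<le> u \<bullet> (T *v u)" using S T by (auto simp: psd_def)
    ultimately consider "mu = 0" | "u \<bullet> (S *v u) = 0 \<and> u \<bullet> (T *v u) = 0"
      unfolding mult_eq_0_iff by linarith
    thus ?thesis
    proof cases
      case 1 thus ?thesis by (simp add: Dmu)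
    next
      case 2
      hence "S *v u = 0" "T *v u = 0" using psd_zero_form S T by auto
      thus ?thesis by (simp add: D_def matrix_vector_mult_diff_rdistrib)
    qed
  qed
  have "D *v x = 0 *v x" for x
  proof -
    have l1: "linear (\<lambda>x. D *v x)" by simp
    have l2: "linear (\<lambda>x. (0::real^'n^'n) *v x)" by (simp add: linear_zero)
    show ?thesis using linear_eq_on_span[OF l1 l2 _ B(2)] Du by simp
  qed
  hence "D = 0" by (simp add: matrix_eq)
  thus ?thesis by (simp add: D_def)
qed

lemma psd_sqrt_props:
  fixes A :: "real^'n::finite^'n"
  assumes "psd A"
  shows "psd (psd_sqrt A)" "psd_sqrt A ** psd_sqrt A = A"
proof -
  have "\<exists>!S. psd S \<and> S ** S = A"
  proof -
    obtain S0 where S0: "psd S0" "S0 ** S0 = A" using psd_sqrt_exists[OF assms] by blast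
    show ?thesis
    proof (rule ex1I[of _ S0])
      show "psd S0 \<and> S0 ** S0 = A" using S0 by simp
      fix y assume "psd y \<and> y ** y = A"
      thus "y = S0" using S0 psd_sqrt_unique[of y S0] by simp
    qed
  qed
  hence "psd (psd_sqrt A) \<and> psd_sqrt A ** psd_sqrt A = A"
    unfolding psd_sqrt_def by (rule theI')
  thus "psd (psd_sqrt A)" "psd_sqrt A ** psd_sqrt A = A" by auto
qed


lemma Aset_sqrt:
  fixes P :: "real^'n::finite^'n"
  assumes "P \<in> Aset m"
  defines "S \<equiv> psd_sqrt (mat 1 - P)"
  shows "x \<bullet> ((mat 1 - P) *v x) = (norm (S *v x))^2" "norm (S *v x) \<le> norm x"
proof -
  have psdP: "psd P" and psdI: "psd (mat 1 - P)" using assms(1)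
    by (auto simp: Aset_def loewner_le_def)
  have S: "psd S" "S ** S = mat 1 - P" unfolding S_def using psd_sqrt_props[OF psdI] by auto
  have "(norm (S *v x))^2 = (S *v x) \<bullet> (S *v x)" by (simp add: power2_norm_eq_inner)
  also have "\<dots> = x \<bullet> (S *v (S *v x))" using S(1) by (simp add: psd_def sym_inner)
  also have "\<dots> = x \<bullet> ((mat 1 - P) *v x)" by (simp add: matrix_vector_mul_assoc S(2))
  finally show e: "x \<bullet> ((mat 1 - P) *v x) = (norm (S *v x))^2" by simp
  have "x \<bullet> ((mat 1 - P) *v x) = x \<bullet> x - x \<bullet> (P *v x)"
    by (simp add: matrix_vector_mult_diff_rdistrib inner_diff_right)
  also have "\<dots> \<le> (norm x)^2" using psdP by (simp add: psd_def power2_norm_eq_inner)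
  finally have "(norm (S *v x))^2 \<le> (norm x)^2" using e by simp
  thus "norm (S *v x) \<le> norm x" by (simp add: power2_le_iff_abs_le)
qed

lemma Max_shift:
  fixes g h :: "nat \<Rightarrow> real"
  assumes "finite I" "I \<noteq> {}" "\<And>l. l \<in> I \<Longrightarrow> g l \<le> h l + e"
  shows "Max (g ` I) \<le> Max (h ` I) + e"
proof -
  have "Max (g ` I) \<in> g ` I" using assms by (intro Max_in) auto
  then obtain l where l: "l \<in> I" "Max (g ` I) = g l" by auto
  have "h l \<le> Max (h ` I)" using l assms by auto
  thus ?thesis using l assms(3)[OF l(1)] by simp
qed

lemma Max_sq:
  fixes g :: "nat \<Rightarrow> real"
  assumes "finite I" "I \<noteq> {}" "\<And>l. l \<in> I \<Longrightarrow> 0 \<le> g l"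
  shows "Max ((\<lambda>l. (g l)^2) ` I) = (Max (g ` I))^2"
proof (rule antisym)
  show "Max ((\<lambda>l. (g l)^2) ` I) \<le> (Max (g ` I))^2"
    using assms by (auto intro!: power_mono)
  have "Max (g ` I) \<in> g ` I" using assms by (intro Max_in) auto
  then obtain l where l: "l \<in> I" "Max (g ` I) = g l" by auto
  show "(Max (g ` I))^2 \<le> Max ((\<lambda>l. (g l)^2) ` I)" using l assms by auto
qed

lemma Max_nonneg:
  fixes g :: "nat \<Rightarrow> real"
  assumes "finite I" "I \<noteq> {}" "\<And>l. l \<in> I \<Longrightarrow> 0 \<le> g l"
  shows "0 \<le> Max (g ` I)"
proof -
  obtain l where "l \<in> I" using assms by auto
  thus ?thesis using assms by (meson Max_ge finite_imageI imageI order_trans)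
qed


lemma zero_in_Aset: "(0::'n::finite sqmat) \<in> Aset m"
proof -
  have t0: "transpose (0::'n sqmat) = 0" by (simp add: transpose_def vec_eq_iff)
  have p0: "psd (0::'n sqmat)" unfolding psd_def using t0 by simp
  have p1: "psd (mat 1 - 0::'n sqmat)" unfolding psd_def by simp
  have tr: "trace (0::'n sqmat) = 0" by (simp add: trace_def)
  show ?thesis unfolding Aset_def loewner_le_def using t0 p0 p1 tr by simp
qed

theorem proposition4:
  fixes L m mstar :: nat and \<epsilon> :: real
    and b bh :: "nat \<Rightarrow> real^'n::finite" and Ph :: "'n sqmat"
  assumes L: "L \<ge> 1"
    and sub: "\<exists>S. subspace S \<and> dim S = mstar \<and> (\<forall>l\<in>{1..L}. b l \<in> S)"
    and m: "m \<ge> 1" and eps: "\<epsilon> \<ge> 0"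
    and Ph_mem: "Ph \<in> Aset m"
    and Ph_min: "\<forall>P\<in>Aset m. Rfun L bh Ph \<le> Rfun L bh P"
    and close: "Max ((\<lambda>l. norm (bh l - b l)) ` {1..L}) \<le> \<epsilon>"
  shows "sqrt (Rfun L bh Ph) \<le> Rstar L b m + \<epsilon>
         \<and> (\<forall>bb\<in>Bstar L b. norm (psd_sqrt (mat 1 - Ph) *v bb) \<le> Rstar L b m + 2 * \<epsilon>)
         \<and> (m < mstar \<longrightarrow> sqrt (Rfun L bh Ph) \<ge> max (Rstar L b m - \<epsilon>) 0)"
proof -
  let ?I = "{1..L}"
  have fin: "finite ?I" and ne: "?I \<noteq> {}" using L by auto
  define F where "F P = Max ((\<lambda>l. norm (psd_sqrt (mat 1 - P) *v b l)) ` ?I)" for P :: "'n sqmat"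
  define G where "G P = Max ((\<lambda>l. norm (psd_sqrt (mat 1 - P) *v bh l)) ` ?I)" for P :: "'n sqmat"
  have cl: "norm (bh l - b l) \<le> \<epsilon>" if "l \<in> ?I" for l
    using close that fin by (meson Max_ge finite_imageI imageI order_trans)
  have F0: "0 \<le> F P" for P unfolding F_def by (rule Max_nonneg[OF fin ne]) simp
  have G0: "0 \<le> G P" for P unfolding G_def by (rule Max_nonneg[OF fin ne]) simp
  have RG: "Rfun L bh P = (G P)^2" if P: "P \<in> Aset m" for P
  proof -
    have "Rfun L bh P = Max ((\<lambda>l. (norm (psd_sqrt (mat 1 - P) *v bh l))^2) ` ?I)"
      unfolding Rfun_def using Aset_sqrt(1)[OF P] by simp
    also have "\<dots> = (G P)^2" unfolding G_def by (rule Max_sq[OF fin ne]) simp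
    finally show ?thesis .
  qed
  have diff: "norm (psd_sqrt (mat 1 - P) *v x) \<le> norm (psd_sqrt (mat 1 - P) *v y) + norm (x - y)"
    if P: "P \<in> Aset m" for P x y
  proof -
    have "norm (psd_sqrt (mat 1 - P) *v x) \<le> norm (psd_sqrt (mat 1 - P) *v y) + norm (psd_sqrt (mat 1 - P) *v (x - y))"
      by (metis matrix_vector_mult_diff_distrib norm_triangle_sub)
    thus ?thesis using Aset_sqrt(2)[OF P, of "x - y"] by simp
  qed
  have GF: "G P \<le> F P + \<epsilon>" if P: "P \<in> Aset m" for P
    unfolding G_def F_def
  proof (rule Max_shift[OF fin ne])
    fix l assume l: "l \<in> ?I"
    show "norm (psd_sqrt (mat 1 - P) *v bh l) \<le> norm (psd_sqrt (mat 1 - P) *v b l) + \<epsilon>"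
      using diff[OF P, of "bh l" "b l"] cl[OF l] by simp
  qed
  have FG: "F P \<le> G P + \<epsilon>" if P: "P \<in> Aset m" for P
    unfolding G_def F_def
  proof (rule Max_shift[OF fin ne])
    fix l assume l: "l \<in> ?I"
    show "norm (psd_sqrt (mat 1 - P) *v b l) \<le> norm (psd_sqrt (mat 1 - P) *v bh l) + \<epsilon>"
      using diff[OF P, of "b l" "bh l"] cl[OF l] by (simp add: norm_minus_commute)
  qed
  have sq: "sqrt (Rfun L bh Ph) = G Ph" using RG[OF Ph_mem] G0[of Ph] by (simp only: real_sqrt_abs abs_of_nonneg)
  have Rs: "Rstar L b m = Inf (F ` Aset m)" unfolding Rstar_def F_def by (rule refl)
  have "(0::'n sqmat) \<in> Aset m"
    by (rule zero_in_Aset)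
  hence Ane: "Aset m \<noteq> ({} :: 'n sqmat set)" by blast
  have bdd: "bdd_below (F ` Aset m)" unfolding bdd_below_def using F0 by blast
  have c1: "G Ph - \<epsilon> \<le> Rstar L b m"
    unfolding Rs
  proof (rule cINF_greatest[OF Ane])
    fix P :: "'n sqmat" assume P: "P \<in> Aset m"
    have "Rfun L bh Ph \<le> Rfun L bh P" using Ph_min P by blast
    hence "(G Ph)^2 \<le> (G P)^2" using RG[OF P] RG[OF Ph_mem] by simp
    hence "G Ph \<le> G P" using G0 by (simp add: power2_le_iff_abs_le)
    thus "G Ph - \<epsilon> \<le> F P" using GF[OF P] by simp
  qed
  have c3: "Rstar L b m \<le> F Ph" unfolding Rs by (rule cINF_lower[OF bdd Ph_mem])
  have c2: "norm (psd_sqrt (mat 1 - Ph) *v bb) \<le> Rstar L b m + 2 * \<epsilon>" if bb: "bb \<in> Bstar L b" for bb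
  proof -
    obtain c where c: "bb = (\<Sum>l\<in>?I. c l *\<^sub>R b l)" "(\<Sum>l\<in>?I. \<bar>c l\<bar>) \<le> 1"
      using bb unfolding Bstar_def by blast
    let ?S = "psd_sqrt (mat 1 - Ph)"
    have "?S *v bb = (\<Sum>l\<in>?I. c l *\<^sub>R (?S *v b l))"
      unfolding c(1) by (simp add: linear_sum[OF matrix_vector_mul_linear] matrix_vector_mult_scaleR)
    hence "norm (?S *v bb) \<le> (\<Sum>l\<in>?I. norm (c l *\<^sub>R (?S *v b l)))"
      by (simp only: norm_sum)
    also have "\<dots> \<le> (\<Sum>l\<in>?I. \<bar>c l\<bar> * F Ph)"
    proof (rule sum_mono)
      fix l assume l: "l \<in> ?I"
      have "norm (?S *v b l) \<le> F Ph" unfolding F_def using fin l by (auto intro: Max_ge)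
      thus "norm (c l *\<^sub>R (?S *v b l)) \<le> \<bar>c l\<bar> * F Ph" by (simp add: mult_left_mono)
    qed
    also have "\<dots> = (\<Sum>l\<in>?I. \<bar>c l\<bar>) * F Ph" by (simp add: sum_distrib_right)
    also have "\<dots> \<le> F Ph" using c(2) F0[of Ph] by (simp add: mult_left_le_one_le)
    also have "\<dots> \<le> G Ph + \<epsilon>" by (rule FG[OF Ph_mem])
    finally show ?thesis using c1 by simp
  qed
  show ?thesis using c1 c2 c3 sq FG[OF Ph_mem] G0[of Ph] by auto
qed

end
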